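(* Let $i\ge1$ and $j\ge0$. There is a graded isomorphism of $E(i)_*$-comodules \[ M_i(j)\cong\Sigma^{qj}N_{i-1}(\lfloor j/p\rfloor). \]
   Context: Let $p$ be an odd prime and $q=2(p-1)$. In the mod $p$ dual Steenrod algebra let $\zeta_n$ (degree $2(p^n-1)$) and $\overline{\tau}_n$ (degree $2p^n-1$) be the conjugates of Milnor's $\xi_n,\tau_n$. For $n\ge0$ let $(A/\!/E(n))_*=\mathbb{F}_p[\zeta_1,\zeta_2,\ldots]\otimes E(\overline{\tau}_{n+1},\overline{\tau}_{n+2},\ldots)$, a comodule over $E(n)_*=E(\overline{\tau}_0,\ldots,\overline{\tau}_n)$ (primitive generators) via the coproduct of the dual Steenrod algebra, and hence also over $E(i)_*$ for any $i$. Weight: $\mathrm{wt}(\zeta_k)=\mathrm{wt}(\overline{\tau}_k)=p^k$, additive on products of monomials. $M_i(j)$ is the span of the monomials of $(A/\!/E(i))_*$ of weight exactly $pj$, and $N_{i-1}(m)$ is the span of the monomials of $(A/\!/E(i-1))_*$ of weight $\le pm$ (both are $E(i)_*$-subcomodules). *)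

theory Defs
  imports "HOL-Library.Poly_Mapping" "Berlekamp_Zassenhaus.Finite_Field"
begin

text \<open>A monomial of A_* = F_p[zeta_1,zeta_2,...] (x) E(taubar_0,taubar_1,...) is a pair (e,T):
  e k is the exponent of zeta_k (k >= 1; the entry at 0 is required to be 0),
  T is the finite set of indices k of the exterior factors taubar_k, the
  exterior part being the product of the taubar_k, k in T, in increasing order of k.\<close>

type_synonym amono = "(nat \<Rightarrow>\<^sub>0 nat) \<times> nat set"

type_synonym 'f avec = "amono \<Rightarrow>\<^sub>0 'f"

text \<open>Monomials of (A//E(n))_* = F_p[zeta_1,...] (x) E(taubar_(n+1), taubar_(n+2), ...).\<close>

definition valid_mono :: "nat \<Rightarrow> amono \<Rightarrow> bool" where
  "valid_mono n m \<longleftrightarrow> Poly_Mapping.lookup (fst m) 0 = 0 \<and> finite (snd m) \<and> (\<forall>k\<in>snd m. n + 1 \<le> k)"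

definition wt :: "nat \<Rightarrow> amono \<Rightarrow> nat" where
  "wt p m = (\<Sum>k\<in>Poly_Mapping.keys (fst m). Poly_Mapping.lookup (fst m) k * p ^ k) + (\<Sum>k\<in>snd m. p ^ k)"

definition deg :: "nat \<Rightarrow> amono \<Rightarrow> nat" where
  "deg p m = (\<Sum>k\<in>Poly_Mapping.keys (fst m). Poly_Mapping.lookup (fst m) k * (2 * (p ^ k - 1))) + (\<Sum>k\<in>snd m. 2 * p ^ k - 1)"

definition M_space :: "nat \<Rightarrow> nat \<Rightarrow> nat \<Rightarrow> ('f::zero) avec set" where
  "M_space p i j = {v. \<forall>m\<in>Poly_Mapping.keys v. valid_mono i m \<and> wt p m = p * j}"

definition N_space :: "nat \<Rightarrow> nat \<Rightarrow> nat \<Rightarrow> ('f::zero) avec set" where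
  "N_space p n m = {v. \<forall>mo\<in>Poly_Mapping.keys v. valid_mono n mo \<and> wt p mo \<le> p * m}"

text \<open>A basis element (S,e,T) stands for taubar'_S (x) zeta^e taubar_T, where taubar'_S is the
  increasing-order product of the generators taubar'_s (s in S) of the LEFT tensor factor
  E(i)_*.  In the graded-commutative algebra E(i)_* (x) A_* (Koszul signs) this is the
  product taubar'_S * zeta^e * taubar_T.\<close>

type_synonym bmono = "nat set \<times> (nat \<Rightarrow>\<^sub>0 nat) \<times> nat set"
type_synonym 'f bvec = "bmono \<Rightarrow>\<^sub>0 'f"

definition ninv :: "nat set \<Rightarrow> nat set \<Rightarrow> nat" where
  "ninv A B = card {(a, b). a \<in> A \<and> b \<in> B \<and> b < a}"

text \<open>Sign of (taubar'_S1 zeta^e1 taubar_T1)(taubar'_S2 zeta^e2 taubar_T2), expressed in the basis;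
  zero if an exterior generator is repeated.\<close>

definition bsign :: "bmono \<Rightarrow> bmono \<Rightarrow> 'f::comm_ring_1" where
  "bsign a b = (case a of (S1, e1, T1) \<Rightarrow> case b of (S2, e2, T2) \<Rightarrow>
     if S1 \<inter> S2 = {} \<and> T1 \<inter> T2 = {}
     then (- 1) ^ (card T1 * card S2 + ninv S1 S2 + ninv T1 T2) else 0)"

definition bmerge :: "bmono \<Rightarrow> bmono \<Rightarrow> bmono" where
  "bmerge a b = (case a of (S1, e1, T1) \<Rightarrow> case b of (S2, e2, T2) \<Rightarrow> (S1 \<union> S2, e1 + e2, T1 \<union> T2))"

definition bmul :: "'f::comm_ring_1 bvec \<Rightarrow> 'f bvec \<Rightarrow> 'f bvec" where
  "bmul x y = (\<Sum>a\<in>Poly_Mapping.keys x. \<Sum>b\<in>Poly_Mapping.keys y.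
      Poly_Mapping.single (bmerge a b) (Poly_Mapping.lookup x a * Poly_Mapping.lookup y b * bsign a b))"

definition bone :: "'f::comm_ring_1 bvec" where
  "bone = Poly_Mapping.single ({}, 0, {}) 1"

text \<open>The coproduct of the dual Steenrod algebra in conjugate generators is
  psi(zeta_n) = sum_k zeta_k (x) zeta_(n-k)^(p^k),
  psi(taubar_n) = 1 (x) taubar_n + sum_k taubar_k (x) zeta_(n-k)^(p^k)   (zeta_0 = 1).
  Projecting the left factor onto E(i)_* = E(taubar_0,...,taubar_i) gives the left
  E(i)_*-coaction: zeta_n |-> 1 (x) zeta_n and
  taubar_n |-> 1 (x) taubar_n + sum_(k <= min i n) taubar_k (x) zeta_(n-k)^(p^k).\<close>

definition psi_tau :: "nat \<Rightarrow> nat \<Rightarrow> nat \<Rightarrow> 'f::comm_ring_1 bvec" where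
  "psi_tau p i n = Poly_Mapping.single ({}, 0, {n}) 1 +
     (\<Sum>k\<in>{..min i n}. Poly_Mapping.single
        ({k}, (if k < n then Poly_Mapping.single (n - k) (p ^ k) else 0), {}) 1)"

text \<open>The coaction is multiplicative: on the monomial zeta^e taubar_(k1) ... taubar_(kr)
  (k1 < ... < kr) it is (1 (x) zeta^e) psi(taubar_(k1)) ... psi(taubar_(kr)).\<close>

definition psi_mono :: "nat \<Rightarrow> nat \<Rightarrow> amono \<Rightarrow> 'f::comm_ring_1 bvec" where
  "psi_mono p i m = bmul (Poly_Mapping.single ({}, fst m, {}) 1)
      (foldr (\<lambda>n acc. bmul (psi_tau p i n) acc) (sorted_list_of_set (snd m)) bone)"

definition psi :: "nat \<Rightarrow> nat \<Rightarrow> 'f::comm_ring_1 avec \<Rightarrow> 'f bvec" where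
  "psi p i x = (\<Sum>m\<in>Poly_Mapping.keys x. bmul (Poly_Mapping.single ({}, 0, {}) (Poly_Mapping.lookup x m)) (psi_mono p i m))"

text \<open>Component of an element of E(i)_* (x) A_* at the basis element taubar'_S of E(i)_*:
  X = sum_S taubar'_S (x) comp S X.\<close>

definition comp :: "nat set \<Rightarrow> 'f::zero bvec \<Rightarrow> 'f avec" where
  "comp S X = Abs_poly_mapping (\<lambda>(e, T). Poly_Mapping.lookup X (S, e, T))"

text \<open>A map f : V -> W between subcomodules V, W of A_* (with the coaction psi p i) is a
  comodule map iff (1 (x) f) o psi = psi o f, i.e. f commutes with each component.\<close>

definition homog :: "nat \<Rightarrow> nat \<Rightarrow> 'f::zero avec \<Rightarrow> bool" where
  "homog p d v \<longleftrightarrow> (\<forall>m\<in>Poly_Mapping.keys v. deg p m = d)"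

definition comod_iso_shift ::
  "nat \<Rightarrow> nat \<Rightarrow> nat \<Rightarrow> 'f::comm_ring_1 avec set \<Rightarrow> 'f avec set \<Rightarrow> ('f avec \<Rightarrow> 'f avec) \<Rightarrow> bool" where
  "comod_iso_shift p i s V W f \<longleftrightarrow>
     bij_betw f V W \<and>
     (\<forall>x\<in>V. \<forall>y\<in>V. f (x + y) = f x + f y) \<and>
     (\<forall>c. \<forall>x\<in>V. f (Poly_Mapping.map ((*) c) x) = Poly_Mapping.map ((*) c) (f x)) \<and>
     (\<forall>x\<in>V. \<forall>d. homog p d x \<longrightarrow> (\<forall>m\<in>Poly_Mapping.keys (f x). deg p m + s = d)) \<and>
     (\<forall>x\<in>V. \<forall>S \<subseteq> {..i}. f (comp S (psi p i x)) = comp S (psi p i (f x)))"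

end

theory Submission imports Defs begin

section \<open>Generic remapping of keys\<close>

definition remap :: "('a \<Rightarrow> 'b) \<Rightarrow> ('a \<Rightarrow>\<^sub>0 'c::comm_monoid_add) \<Rightarrow> ('b \<Rightarrow>\<^sub>0 'c)" where
  "remap g v = (\<Sum>m\<in>Poly_Mapping.keys v. Poly_Mapping.single (g m) (Poly_Mapping.lookup v m))"

lemma remap_superset:
  assumes "finite A" "Poly_Mapping.keys v \<subseteq> A"
  shows "remap g v = (\<Sum>m\<in>A. Poly_Mapping.single (g m) (Poly_Mapping.lookup v m))"
  unfolding remap_def using assms by (intro sum.mono_neutral_left) (auto simp: in_keys_iff)

lemma remap_zero [simp]: "remap g 0 = 0"
  by (simp add: remap_def)

lemma remap_add: "remap g (v + w) = remap g v + remap g w"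
proof -
  let ?A = "Poly_Mapping.keys v \<union> Poly_Mapping.keys w"
  have f: "finite ?A" by simp
  have "remap g (v + w) = (\<Sum>m\<in>?A. Poly_Mapping.single (g m) (Poly_Mapping.lookup (v + w) m))"
    by (rule remap_superset[OF f keys_add])
  also have "\<dots> = (\<Sum>m\<in>?A. Poly_Mapping.single (g m) (Poly_Mapping.lookup v m))
     + (\<Sum>m\<in>?A. Poly_Mapping.single (g m) (Poly_Mapping.lookup w m))"
    by (simp add: lookup_add single_add sum.distrib)
  also have "\<dots> = remap g v + remap g w"
    using remap_superset[OF f, of v g] remap_superset[OF f, of w g] by simp
  finally show ?thesis .
qed

lemma remap_single [simp]: "remap g (Poly_Mapping.single a c) = Poly_Mapping.single (g a) c"
  by (simp add: remap_def)

lemma remap_sum: "remap g (sum F I) = (\<Sum>i\<in>I. remap g (F i))"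
  by (induction I rule: infinite_finite_induct) (auto simp: remap_add)

lemma lookup_remap:
  assumes "finite A" "Poly_Mapping.keys v \<subseteq> A"
  shows "Poly_Mapping.lookup (remap g v) k = (\<Sum>m\<in>A. if g m = k then Poly_Mapping.lookup v m else 0)"
  by (simp add: remap_superset[OF assms] lookup_sum lookup_single when_def)

lemma lookup_smul [simp]: "Poly_Mapping.lookup (Poly_Mapping.map ((*) (c::'c::comm_semiring_1)) v) k = c * Poly_Mapping.lookup v k"
  by (simp add: map.rep_eq when_def)

lemma keys_smul: "Poly_Mapping.keys (Poly_Mapping.map ((*) (c::'c::comm_semiring_1)) v) \<subseteq> Poly_Mapping.keys v"
proof
  fix x assume "x \<in> Poly_Mapping.keys (Poly_Mapping.map ((*) c) v)"
  then have "c * Poly_Mapping.lookup v x \<noteq> 0" by (simp add: in_keys_iff)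
  then show "x \<in> Poly_Mapping.keys v" by (auto simp: in_keys_iff)
qed

lemma remap_smul:
  "remap g (Poly_Mapping.map ((*) (c::'c::comm_semiring_1)) v) = Poly_Mapping.map ((*) c) (remap g v)"
proof (rule poly_mapping_eqI)
  fix k
  have f: "finite (Poly_Mapping.keys v)" by simp
  have "Poly_Mapping.lookup (remap g (Poly_Mapping.map ((*) c) v)) k =
     (\<Sum>m\<in>Poly_Mapping.keys v. if g m = k then c * Poly_Mapping.lookup v m else 0)"
    by (simp add: lookup_remap[OF f keys_smul] cong: if_cong)
  also have "\<dots> = c * (\<Sum>m\<in>Poly_Mapping.keys v. if g m = k then Poly_Mapping.lookup v m else 0)"
    by (simp add: sum_distrib_left if_distrib cong: if_cong)
  also have "\<dots> = Poly_Mapping.lookup (Poly_Mapping.map ((*) c) (remap g v)) k"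
    by (simp add: lookup_remap[OF f order.refl])
  finally show "Poly_Mapping.lookup (remap g (Poly_Mapping.map ((*) c) v)) k =
        Poly_Mapping.lookup (Poly_Mapping.map ((*) c) (remap g v)) k" .
qed

lemma remap_comp: "remap g (remap h v) = remap (g \<circ> h) v"
  unfolding remap_def[of h] remap_sum remap_single by (simp add: remap_def)

lemma remap_id_on:
  assumes "\<And>m. m \<in> Poly_Mapping.keys v \<Longrightarrow> g m = m"
  shows "remap g v = v"
proof (rule poly_mapping_eqI)
  fix k
  have f: "finite (Poly_Mapping.keys v)" by simp
  have "Poly_Mapping.lookup (remap g v) k = (\<Sum>m\<in>Poly_Mapping.keys v. if g m = k then Poly_Mapping.lookup v m else 0)"
    by (rule lookup_remap[OF f order.refl])
  also have "\<dots> = (\<Sum>m\<in>Poly_Mapping.keys v. if m = k then Poly_Mapping.lookup v m else 0)"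
    using assms by (intro sum.cong) auto
  also have "\<dots> = Poly_Mapping.lookup v k"
    by (simp add: in_keys_iff)
  finally show "Poly_Mapping.lookup (remap g v) k = Poly_Mapping.lookup v k" .
qed

lemma keys_remap: "Poly_Mapping.keys (remap g v) \<subseteq> g ` Poly_Mapping.keys v"
proof -
  have "Poly_Mapping.keys (remap g v) \<subseteq> (\<Union>m\<in>Poly_Mapping.keys v. Poly_Mapping.keys (Poly_Mapping.single (g m) (Poly_Mapping.lookup v m)))"
    unfolding remap_def by (rule keys_sum)
  also have "\<dots> \<subseteq> g ` Poly_Mapping.keys v" by auto
  finally show ?thesis .
qed

section \<open>Bilinearity of bmul\<close>

lemma bmul_superset:
  assumes "finite A" "Poly_Mapping.keys X \<subseteq> A" "finite B" "Poly_Mapping.keys Y \<subseteq> B"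
  shows "bmul X Y = (\<Sum>a\<in>A. \<Sum>b\<in>B. Poly_Mapping.single (bmerge a b)
            (Poly_Mapping.lookup X a * Poly_Mapping.lookup Y b * bsign a b))"
proof -
  have "bmul X Y = (\<Sum>a\<in>Poly_Mapping.keys X. \<Sum>b\<in>B. Poly_Mapping.single (bmerge a b)
            (Poly_Mapping.lookup X a * Poly_Mapping.lookup Y b * bsign a b))"
    unfolding bmul_def
    by (intro sum.cong refl sum.mono_neutral_left assms) (auto simp: in_keys_iff)
  also have "\<dots> = (\<Sum>a\<in>A. \<Sum>b\<in>B. Poly_Mapping.single (bmerge a b)
            (Poly_Mapping.lookup X a * Poly_Mapping.lookup Y b * bsign a b))"
    by (intro sum.mono_neutral_left assms) (auto simp: in_keys_iff)
  finally show ?thesis .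
qed

lemma bmul_zero_left [simp]: "bmul 0 Y = 0"
  by (simp add: bmul_def)

lemma bmul_zero_right [simp]: "bmul X 0 = 0"
  by (simp add: bmul_def)

lemma bmul_add_left: "bmul (X + X') Y = bmul X Y + bmul X' Y"
proof -
  let ?A = "Poly_Mapping.keys X \<union> Poly_Mapping.keys X'"
  let ?B = "Poly_Mapping.keys Y"
  have fA: "finite ?A" and fB: "finite ?B" by simp_all
  note e1 = bmul_superset[OF fA keys_add fB order.refl]
  note e2 = bmul_superset[OF fA Un_upper1 fB order.refl]
  note e3 = bmul_superset[OF fA Un_upper2 fB order.refl]
  show ?thesis
    unfolding e1 e2 e3 by (simp add: lookup_add distrib_right single_add sum.distrib)
qed

lemma bmul_add_right: "bmul X (Y + Y') = bmul X Y + bmul X Y'"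
proof -
  let ?B = "Poly_Mapping.keys Y \<union> Poly_Mapping.keys Y'"
  let ?A = "Poly_Mapping.keys X"
  have fA: "finite ?A" and fB: "finite ?B" by simp_all
  note e1 = bmul_superset[OF fA order.refl fB keys_add]
  note e2 = bmul_superset[OF fA order.refl fB Un_upper1]
  note e3 = bmul_superset[OF fA order.refl fB Un_upper2]
  show ?thesis
    unfolding e1 e2 e3 by (simp add: lookup_add distrib_right distrib_left single_add sum.distrib)
qed

lemma bmul_sum_left: "bmul (sum F I) Y = (\<Sum>i\<in>I. bmul (F i) Y)"
  by (induction I rule: infinite_finite_induct) (auto simp: bmul_add_left)

lemma bmul_sum_right: "bmul X (sum F I) = (\<Sum>i\<in>I. bmul X (F i))"
  by (induction I rule: infinite_finite_induct) (auto simp: bmul_add_right)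

lemma bmul_single:
  "bmul (Poly_Mapping.single a c) (Poly_Mapping.single b d) = Poly_Mapping.single (bmerge a b) (c * d * bsign a b)"
proof -
  have "bmul (Poly_Mapping.single a c) (Poly_Mapping.single b d) = (\<Sum>x\<in>{a}. \<Sum>y\<in>{b}. Poly_Mapping.single (bmerge x y)
    (Poly_Mapping.lookup (Poly_Mapping.single a c) x * Poly_Mapping.lookup (Poly_Mapping.single b d) y * bsign x y))"
    by (rule bmul_superset) simp_all
  then show ?thesis by simp
qed

lemma keys_bmul:
  assumes "m \<in> Poly_Mapping.keys (bmul X Y)"
  shows "\<exists>a\<in>Poly_Mapping.keys X. \<exists>b\<in>Poly_Mapping.keys Y. m = bmerge a b"
proof -
  let ?G = "\<lambda>a b. Poly_Mapping.single (bmerge a b)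
      (Poly_Mapping.lookup X a * Poly_Mapping.lookup Y b * bsign a b)"
  have "Poly_Mapping.keys (bmul X Y) \<subseteq> (\<Union>a\<in>Poly_Mapping.keys X. Poly_Mapping.keys (\<Sum>b\<in>Poly_Mapping.keys Y. ?G a b))"
    unfolding bmul_def by (rule keys_sum)
  with assms obtain a where a: "a \<in> Poly_Mapping.keys X" and
    m1: "m \<in> Poly_Mapping.keys (\<Sum>b\<in>Poly_Mapping.keys Y. ?G a b)"
    by blast
  have "Poly_Mapping.keys (\<Sum>b\<in>Poly_Mapping.keys Y. ?G a b) \<subseteq> (\<Union>b\<in>Poly_Mapping.keys Y. Poly_Mapping.keys (?G a b))"
    by (rule keys_sum)
  with m1 obtain b where b: "b \<in> Poly_Mapping.keys Y" and m2: "m \<in> Poly_Mapping.keys (?G a b)"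
    by blast
  from m2 have "m = bmerge a b" by (simp split: if_splits)
  with a b show ?thesis by blast
qed

section \<open>The index shift\<close>

definition sh :: "(nat \<Rightarrow>\<^sub>0 nat) \<Rightarrow> (nat \<Rightarrow>\<^sub>0 nat)" where
  "sh e = Abs_poly_mapping (\<lambda>k. if k = 0 then 0 else Poly_Mapping.lookup e (Suc k))"

lemma lookup_sh: "Poly_Mapping.lookup (sh e) k = (if k = 0 then 0 else Poly_Mapping.lookup e (Suc k))"
proof -
  have "{k. (if k = 0 then 0 else Poly_Mapping.lookup e (Suc k)) \<noteq> 0} \<subseteq> (\<lambda>k. k - 1) ` {k. Poly_Mapping.lookup e k \<noteq> 0}"
  proof
    fix k assume "k \<in> {k. (if k = 0 then 0 else Poly_Mapping.lookup e (Suc k)) \<noteq> 0}"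
    then have "Poly_Mapping.lookup e (Suc k) \<noteq> 0" by (auto split: if_splits)
    then show "k \<in> (\<lambda>k. k - 1) ` {k. Poly_Mapping.lookup e k \<noteq> 0}"
      by (intro image_eqI[of _ _ "Suc k"]) auto
  qed
  then have "finite {k. (if k = 0 then 0 else Poly_Mapping.lookup e (Suc k)) \<noteq> 0}"
    by (rule finite_subset) simp
  then show ?thesis unfolding sh_def by simp
qed

lemma sh_add: "sh (a + b) = sh a + sh b"
  by (rule poly_mapping_eqI) (simp add: lookup_sh lookup_add)

lemma sh_zero [simp]: "sh 0 = 0"
  by (rule poly_mapping_eqI) (simp add: lookup_sh)

lemma sh_single: "sh (Poly_Mapping.single n c) = (if 2 \<le> n then Poly_Mapping.single (n - 1) c else 0)"
  by (rule poly_mapping_eqI) (auto simp: lookup_sh lookup_single when_def)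

definition shT :: "nat set \<Rightarrow> nat set" where
  "shT T = (\<lambda>k. k - 1) ` T"

definition phi :: "amono \<Rightarrow> amono" where
  "phi m = (sh (fst m), shT (snd m))"

definition Phi :: "bmono \<Rightarrow> bmono" where
  "Phi b = (fst b, phi (snd b))"

definition goodb :: "bmono \<Rightarrow> bool" where
  "goodb b \<longleftrightarrow> (\<forall>t\<in>snd (snd b). 1 \<le> t)"

definition goodv :: "'f::zero bvec \<Rightarrow> bool" where
  "goodv X \<longleftrightarrow> (\<forall>b\<in>Poly_Mapping.keys X. goodb b)"

lemma Phi_simp [simp]: "Phi (S, e, T) = (S, sh e, shT T)"
  by (simp add: Phi_def phi_def)

lemma Phi_merge: "Phi (bmerge a b) = bmerge (Phi a) (Phi b)"
  by (cases a; cases b) (simp add: bmerge_def sh_add shT_def image_Un)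

lemma inj_on_pred: "(\<forall>t\<in>T. 1 \<le> t) \<Longrightarrow> inj_on (\<lambda>k::nat. k - 1) T"
proof (rule inj_onI)
  fix x y assume a: "\<forall>t\<in>T. 1 \<le> t" "x \<in> T" "y \<in> T" "x - 1 = y - 1"
  then have "1 \<le> x" "1 \<le> y" by auto
  with a(4) show "x = y" by arith
qed

lemma ninv_shT:
  assumes "\<forall>t\<in>T1. 1 \<le> t" "\<forall>t\<in>T2. 1 \<le> t"
  shows "ninv (shT T1) (shT T2) = ninv T1 T2"
proof -
  let ?h = "\<lambda>(a::nat, b::nat). (a - 1, b - 1)"
  let ?R = "{(a, b). a \<in> T1 \<and> b \<in> T2 \<and> b < a}"
  have eq: "{(a, b). a \<in> shT T1 \<and> b \<in> shT T2 \<and> b < a} = ?h ` ?R"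
  proof
    show "{(a, b). a \<in> shT T1 \<and> b \<in> shT T2 \<and> b < a} \<subseteq> ?h ` ?R"
    proof
      fix x assume "x \<in> {(a, b). a \<in> shT T1 \<and> b \<in> shT T2 \<and> b < a}"
      then obtain a b where x: "x = (a - 1, b - 1)" "a \<in> T1" "b \<in> T2" "b - 1 < a - 1"
        unfolding shT_def by auto
      with assms have "b < a" by fastforce
      with x show "x \<in> ?h ` ?R" by (intro image_eqI[of _ _ "(a, b)"]) auto
    qed
  next
    show "?h ` ?R \<subseteq> {(a, b). a \<in> shT T1 \<and> b \<in> shT T2 \<and> b < a}"
    proof
      fix x assume "x \<in> ?h ` ?R"
      then obtain a b where x: "x = (a - 1, b - 1)" "a \<in> T1" "b \<in> T2" "b < a" by auto
      with assms have "b - 1 < a - 1" by fastforce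
      with x show "x \<in> {(a, b). a \<in> shT T1 \<and> b \<in> shT T2 \<and> b < a}"
        unfolding shT_def by auto
    qed
  qed
  have inj: "inj_on ?h ?R"
  proof (rule inj_onI)
    fix x y assume xy: "x \<in> ?R" "y \<in> ?R" "?h x = ?h y"
    obtain a b c d where ab: "x = (a, b)" "y = (c, d)" by fastforce
    from xy ab assms have "1 \<le> a" "1 \<le> b" "1 \<le> c" "1 \<le> d" "a - 1 = c - 1" "b - 1 = d - 1"
      by auto
    then have "a = c" "b = d" by arith+
    with ab show "x = y" by simp
  qed
  show ?thesis unfolding ninv_def eq card_image[OF inj] ..
qed

lemma Phi_sign:
  assumes "goodb a" "goodb b"
  shows "bsign (Phi a) (Phi b) = bsign a b"
proof -
  obtain S1 e1 T1 where a: "a = (S1, e1, T1)" by (cases a) auto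
  obtain S2 e2 T2 where b: "b = (S2, e2, T2)" by (cases b) auto
  have g1: "\<forall>t\<in>T1. 1 \<le> t" and g2: "\<forall>t\<in>T2. 1 \<le> t"
    using assms a b by (auto simp: goodb_def)
  have c1: "card (shT T1) = card T1"
    unfolding shT_def by (rule card_image[OF inj_on_pred[OF g1]])
  have inj12: "inj_on (\<lambda>k::nat. k - 1) (T1 \<union> T2)"
    using g1 g2 by (intro inj_on_pred) auto
  have "shT T1 \<inter> shT T2 = shT (T1 \<inter> T2)"
    unfolding shT_def by (rule inj_on_image_Int[OF inj12, symmetric]) auto
  then have d: "(shT T1 \<inter> shT T2 = {}) = (T1 \<inter> T2 = {})"
    by (simp add: shT_def)
  show ?thesis
    using a b by (simp add: bsign_def c1 d ninv_shT[OF g1 g2])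
qed

lemma remap_bmul:
  fixes X Y :: "'f::comm_ring_1 bvec"
  assumes "goodv X" "goodv Y"
  shows "remap Phi (bmul X Y) = bmul (remap Phi X) (remap Phi Y)"
proof -
  have "remap Phi (bmul X Y) = (\<Sum>a\<in>Poly_Mapping.keys X. \<Sum>b\<in>Poly_Mapping.keys Y.
      Poly_Mapping.single (Phi (bmerge a b)) (Poly_Mapping.lookup X a * Poly_Mapping.lookup Y b * bsign a b))"
    unfolding bmul_def remap_sum remap_single ..
  also have "\<dots> = (\<Sum>a\<in>Poly_Mapping.keys X. \<Sum>b\<in>Poly_Mapping.keys Y.
      Poly_Mapping.single (bmerge (Phi a) (Phi b)) (Poly_Mapping.lookup X a * Poly_Mapping.lookup Y b * bsign (Phi a) (Phi b)))"
    using assms by (intro sum.cong refl) (simp add: Phi_merge Phi_sign goodv_def)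
  also have "\<dots> = bmul (remap Phi X) (remap Phi Y)"
    unfolding remap_def[of Phi X] remap_def[of Phi Y] bmul_sum_left bmul_sum_right bmul_single
    by (rule sum.swap)
  finally show ?thesis .
qed

lemma goodv_bmul:
  assumes "goodv X" "goodv Y"
  shows "goodv (bmul X Y)"
  unfolding goodv_def
proof
  fix m assume "m \<in> Poly_Mapping.keys (bmul X Y)"
  then obtain a b where "a \<in> Poly_Mapping.keys X" "b \<in> Poly_Mapping.keys Y" "m = bmerge a b"
    using keys_bmul by blast
  with assms show "goodb m"
    by (cases a; cases b) (auto simp: goodv_def goodb_def bmerge_def)
qed

section \<open>The coaction and the shift\<close>

lemma shT_empty [simp]: "shT {} = {}"
  by (simp add: shT_def)

lemma remap_psi_tau:
  assumes "i + 1 \<le> n"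
  shows "remap Phi (psi_tau p i n :: 'f::comm_ring_1 bvec) = psi_tau p i (n - 1)"
proof -
  have m1: "min i n = i" "min i (n - 1) = i" using assms by auto
  have "remap Phi (psi_tau p i n :: 'f bvec) = Poly_Mapping.single ({}, 0, {n - 1}) 1 +
     (\<Sum>k\<in>{..i}. Poly_Mapping.single ({k}, sh (if k < n then Poly_Mapping.single (n - k) (p ^ k) else 0), {}) 1)"
    unfolding psi_tau_def m1 remap_add remap_sum remap_single by (simp add: shT_def)
  also have "\<dots> = psi_tau p i (n - 1)"
    unfolding psi_tau_def m1 using assms
    by (intro arg_cong2[where f="(+)"] refl sum.cong) (auto simp: sh_single)
  finally show ?thesis .
qed

lemma goodv_psi_tau:
  assumes "1 \<le> n"
  shows "goodv (psi_tau p i n :: 'f::comm_ring_1 bvec)"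
  unfolding goodv_def
proof
  fix b assume b: "b \<in> Poly_Mapping.keys (psi_tau p i n :: 'f bvec)"
  let ?F = "\<lambda>k. Poly_Mapping.single ({k}, (if k < n then Poly_Mapping.single (n - k) (p ^ k) else 0), {}) (1::'f)"
  have "Poly_Mapping.keys (psi_tau p i n :: 'f bvec) \<subseteq>
     Poly_Mapping.keys (Poly_Mapping.single ({}, 0, {n}) (1::'f)) \<union> Poly_Mapping.keys (\<Sum>k\<in>{..min i n}. ?F k)"
    unfolding psi_tau_def by (rule keys_add)
  moreover have "Poly_Mapping.keys (\<Sum>k\<in>{..min i n}. ?F k) \<subseteq> (\<Union>k\<in>{..min i n}. Poly_Mapping.keys (?F k))"
    by (rule keys_sum)
  ultimately have "b \<in> Poly_Mapping.keys (Poly_Mapping.single ({}, 0, {n}) (1::'f)) \<or> (\<exists>k. b \<in> Poly_Mapping.keys (?F k))"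
    using b by blast
  then show "goodb b"
    using assms by (auto simp: goodb_def split: if_splits)
qed

lemma goodv_bone: "goodv (bone :: 'f::comm_ring_1 bvec)"
  by (simp add: goodv_def goodb_def bone_def)

lemma remap_bone: "remap Phi (bone :: 'f::comm_ring_1 bvec) = bone"
  by (simp add: bone_def)

lemma foldr_good:
  "\<forall>n\<in>set L. 1 \<le> n \<Longrightarrow> goodv (foldr (\<lambda>n acc. bmul (psi_tau p i n) acc) L (bone :: 'f::comm_ring_1 bvec))"
proof (induction L)
  case Nil
  then show ?case by (simp add: goodv_bone)
next
  case (Cons a L)
  then show ?case unfolding foldr.simps o_def by (intro goodv_bmul goodv_psi_tau) auto
qed

lemma foldr_remap:
  "\<forall>n\<in>set L. i + 1 \<le> n \<Longrightarrow> remap Phi (foldr (\<lambda>n acc. bmul (psi_tau p i n) acc) L (bone :: 'f::comm_ring_1 bvec))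
     = foldr (\<lambda>n acc. bmul (psi_tau p i n) acc) (map (\<lambda>n. n - 1) L) bone"
proof (induction L)
  case Nil
  then show ?case by (simp add: remap_bone)
next
  case (Cons a L)
  have g1: "goodv (psi_tau p i a :: 'f bvec)" using Cons.prems by (intro goodv_psi_tau) auto
  have g2: "goodv (foldr (\<lambda>n acc. bmul (psi_tau p i n) acc) L (bone :: 'f bvec))"
    using Cons.prems by (intro foldr_good) auto
  show ?case
    using Cons by (simp add: remap_bmul[OF g1 g2] remap_psi_tau)
qed

lemma sorted_shT:
  assumes "finite T" "\<forall>t\<in>T. 1 \<le> t"
  shows "sorted_list_of_set (shT T) = map (\<lambda>n. n - 1) (sorted_list_of_set T)"
proof -
  let ?L = "sorted_list_of_set T"
  have s: "sorted_wrt (<) ?L" by (rule strict_sorted_list_of_set)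
  have "sorted_wrt (<) (map (\<lambda>n. n - 1) ?L)"
    unfolding sorted_wrt_map
  proof (rule sorted_wrt_mono_rel[OF _ s])
    fix x y assume "x \<in> set ?L" "y \<in> set ?L" "x < y"
    with assms show "x - 1 < y - 1" by fastforce
  qed
  moreover have "set (map (\<lambda>n. n - 1) ?L) = shT T"
    using assms by (simp add: shT_def)
  moreover have "length (map (\<lambda>n. n - 1) ?L) = card (shT T)"
    using card_image[OF inj_on_pred[OF assms(2)]] unfolding shT_def by simp
  moreover have "finite (shT T)" using assms by (simp add: shT_def)
  ultimately show ?thesis
    using sorted_list_of_set_unique by blast
qed

lemma psi_mono_phi:
  assumes "finite (snd m)" "\<forall>t\<in>snd m. i + 1 \<le> t"
  shows "psi_mono p i (phi m) = (remap Phi (psi_mono p i m) :: 'f::comm_ring_1 bvec)"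
proof -
  let ?L = "sorted_list_of_set (snd m)"
  have g: "\<forall>t\<in>snd m. 1 \<le> t" using assms by auto
  have sl: "sorted_list_of_set (shT (snd m)) = map (\<lambda>n. n - 1) ?L"
    by (rule sorted_shT[OF assms(1) g])
  have gL1: "\<forall>n\<in>set ?L. 1 \<le> n" and gL2: "\<forall>n\<in>set ?L. i + 1 \<le> n"
    using assms by auto
  have gs: "goodv (Poly_Mapping.single ({}, fst m, {}) (1::'f))"
    by (simp add: goodv_def goodb_def)
  show ?thesis
    unfolding psi_mono_def remap_bmul[OF gs foldr_good[OF gL1]] foldr_remap[OF gL2] remap_single
    by (simp add: phi_def sl)
qed

lemma bmerge_unit [simp]: "bmerge ({}, 0, {}) b = b"
  by (cases b) (simp add: bmerge_def)

lemma bsign_unit [simp]: "bsign ({}, 0, {}) b = 1"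
  by (cases b) (simp add: bsign_def ninv_def)

lemma bmul_unit: "bmul (Poly_Mapping.single ({}, 0, {}) c) Y = Poly_Mapping.map ((*) c) (Y :: 'f::comm_ring_1 bvec)"
proof -
  have "bmul (Poly_Mapping.single ({}, 0, {}) c) Y = (\<Sum>x\<in>{({}, 0, {})}. \<Sum>b\<in>Poly_Mapping.keys Y.
     Poly_Mapping.single (bmerge x b) (Poly_Mapping.lookup (Poly_Mapping.single ({}, 0, {}) c) x * Poly_Mapping.lookup Y b * bsign x b))"
    by (rule bmul_superset) simp_all
  also have "\<dots> = (\<Sum>b\<in>Poly_Mapping.keys Y. Poly_Mapping.single b (c * Poly_Mapping.lookup Y b))"
    by simp
  also have "\<dots> = Poly_Mapping.map ((*) c) Y"
  proof (rule poly_mapping_eqI)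
    fix k
    show "Poly_Mapping.lookup (\<Sum>b\<in>Poly_Mapping.keys Y. Poly_Mapping.single b (c * Poly_Mapping.lookup Y b)) k
      = Poly_Mapping.lookup (Poly_Mapping.map ((*) c) Y) k"
      by (simp add: lookup_sum lookup_single when_def in_keys_iff)
  qed
  finally show ?thesis .
qed

lemma smul_zero_scalar [simp]: "Poly_Mapping.map ((*) (0::'f::comm_ring_1)) Y = 0"
  by (rule poly_mapping_eqI) simp

lemma smul_add_scalar: "Poly_Mapping.map ((*) ((a::'f::comm_ring_1) + b)) Y = Poly_Mapping.map ((*) a) Y + Poly_Mapping.map ((*) b) Y"
  by (rule poly_mapping_eqI) (simp add: lookup_add distrib_right)

lemma psi_superset:
  assumes "finite A" "Poly_Mapping.keys x \<subseteq> A"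
  shows "psi p i (x :: 'f::comm_ring_1 avec) = (\<Sum>m\<in>A. Poly_Mapping.map ((*) (Poly_Mapping.lookup x m)) (psi_mono p i m))"
  unfolding psi_def bmul_unit using assms
  by (intro sum.mono_neutral_left) (auto simp: in_keys_iff)

lemma psi_add: "psi p i (x + y :: 'f::comm_ring_1 avec) = psi p i x + psi p i y"
proof -
  let ?A = "Poly_Mapping.keys x \<union> Poly_Mapping.keys y"
  have f: "finite ?A" by simp
  show ?thesis
    unfolding psi_superset[OF f keys_add] psi_superset[OF f Un_upper1] psi_superset[OF f Un_upper2]
    by (simp add: lookup_add smul_add_scalar sum.distrib)
qed

lemma psi_zero [simp]: "psi p i (0 :: 'f::comm_ring_1 avec) = 0"
  by (simp add: psi_def)

lemma psi_single: "psi p i (Poly_Mapping.single m c :: 'f::comm_ring_1 avec) = Poly_Mapping.map ((*) c) (psi_mono p i m)"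
  by (subst psi_superset[of "{m}"]) simp_all

lemma psi_sum: "psi p i (sum F I :: 'f::comm_ring_1 avec) = (\<Sum>k\<in>I. psi p i (F k))"
  by (induction I rule: infinite_finite_induct) (auto simp: psi_add)

lemma psi_remap:
  assumes "\<forall>m\<in>Poly_Mapping.keys x. finite (snd m) \<and> (\<forall>t\<in>snd m. i + 1 \<le> t)"
  shows "psi p i (remap phi x) = remap Phi (psi p i (x :: 'f::comm_ring_1 avec))"
proof -
  have "psi p i (remap phi x) = (\<Sum>m\<in>Poly_Mapping.keys x. Poly_Mapping.map ((*) (Poly_Mapping.lookup x m)) (psi_mono p i (phi m)))"
    unfolding remap_def psi_sum psi_single ..
  also have "\<dots> = (\<Sum>m\<in>Poly_Mapping.keys x. remap Phi (Poly_Mapping.map ((*) (Poly_Mapping.lookup x m)) (psi_mono p i m)))"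
    using assms by (intro sum.cong refl) (simp add: psi_mono_phi remap_smul)
  also have "\<dots> = remap Phi (psi p i x)"
    by (simp add: remap_sum psi_def bmul_unit)
  finally show ?thesis .
qed

lemma lookup_comp: "Poly_Mapping.lookup (comp S X) m = Poly_Mapping.lookup X (S, fst m, snd m)"
proof -
  have "finite {x. (case x of (e, T) \<Rightarrow> Poly_Mapping.lookup X (S, e, T)) \<noteq> 0}"
  proof (rule finite_subset[OF _ finite_imageI[OF finite_keys]])
    show "{x. (case x of (e, T) \<Rightarrow> Poly_Mapping.lookup X (S, e, T)) \<noteq> 0} \<subseteq> snd ` Poly_Mapping.keys X"
    proof
      fix x assume x: "x \<in> {x. (case x of (e, T) \<Rightarrow> Poly_Mapping.lookup X (S, e, T)) \<noteq> 0}"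
      obtain e T where xe: "x = (e, T)" by fastforce
      with x have "(S, e, T) \<in> Poly_Mapping.keys X" by (simp add: in_keys_iff)
      then show "x \<in> snd ` Poly_Mapping.keys X" using xe by (intro image_eqI[of _ _ "(S, e, T)"]) auto
    qed
  qed
  then show ?thesis unfolding comp_def by (simp split: prod.splits)
qed

lemma comp_remap: "comp S (remap Phi X) = remap phi (comp S (X :: 'f::comm_ring_1 bvec))"
proof (rule poly_mapping_eqI)
  fix m
  let ?K = "{a \<in> Poly_Mapping.keys X. fst a = S}"
  have fX: "finite (Poly_Mapping.keys X)" by simp
  have kc: "Poly_Mapping.keys (comp S X) = snd ` ?K"
  proof
    show "Poly_Mapping.keys (comp S X) \<subseteq> snd ` ?K"
    proof
      fix y assume "y \<in> Poly_Mapping.keys (comp S X)"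
      then have "(S, y) \<in> Poly_Mapping.keys X" by (simp add: in_keys_iff lookup_comp)
      then show "y \<in> snd ` ?K" by (intro image_eqI[of _ _ "(S, y)"]) auto
    qed
  next
    show "snd ` ?K \<subseteq> Poly_Mapping.keys (comp S X)"
      by (auto simp: in_keys_iff lookup_comp)
  qed
  have inj: "inj_on snd ?K" by (auto simp: inj_on_def prod_eq_iff)
  have "Poly_Mapping.lookup (comp S (remap Phi X)) m = Poly_Mapping.lookup (remap Phi X) (S, m)"
    by (simp add: lookup_comp)
  also have "\<dots> = (\<Sum>a\<in>Poly_Mapping.keys X. if Phi a = (S, m) then Poly_Mapping.lookup X a else 0)"
    by (rule lookup_remap[OF fX order.refl])
  also have "\<dots> = (\<Sum>a\<in>Poly_Mapping.keys X. if fst a = S then (if phi (snd a) = m then Poly_Mapping.lookup X a else 0) else 0)"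
    by (intro sum.cong refl) (auto simp: Phi_def)
  also have "\<dots> = (\<Sum>a\<in>?K. if phi (snd a) = m then Poly_Mapping.lookup X a else 0)"
    by (rule sum.inter_filter[OF fX, symmetric])
  also have "\<dots> = (\<Sum>a\<in>?K. if phi (snd a) = m then Poly_Mapping.lookup (comp S X) (snd a) else 0)"
    by (intro sum.cong refl) (auto simp: lookup_comp)
  also have "\<dots> = (\<Sum>y\<in>snd ` ?K. if phi y = m then Poly_Mapping.lookup (comp S X) y else 0)"
    by (simp add: sum.reindex[OF inj])
  also have "\<dots> = Poly_Mapping.lookup (remap phi (comp S X)) m"
    unfolding kc[symmetric] by (rule lookup_remap[OF finite_keys order.refl, symmetric])
  finally show "Poly_Mapping.lookup (comp S (remap Phi X)) m = Poly_Mapping.lookup (remap phi (comp S X)) m" .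
qed

section \<open>Weights and degrees\<close>

lemma sum_sh:
  assumes "Poly_Mapping.lookup e 0 = 0"
  shows "(\<Sum>k\<in>Poly_Mapping.keys e. Poly_Mapping.lookup e k * c k) =
    Poly_Mapping.lookup e 1 * c 1 + (\<Sum>k\<in>Poly_Mapping.keys (sh e). Poly_Mapping.lookup (sh e) k * c (Suc k))"
proof -
  obtain N where N: "\<forall>k\<in>Poly_Mapping.keys e. k < N"
    using finite_nat_set_iff_bounded finite_keys by blast
  have k1: "Poly_Mapping.keys e \<subseteq> {..<Suc (Suc N)}" using N by auto
  have k2: "Poly_Mapping.keys (sh e) \<subseteq> {..<Suc N}"
  proof
    fix k assume "k \<in> Poly_Mapping.keys (sh e)"
    then have "Poly_Mapping.lookup e (Suc k) \<noteq> 0" by (simp add: in_keys_iff lookup_sh split: if_splits)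
    then have "Suc k \<in> Poly_Mapping.keys e" by (simp add: in_keys_iff)
    with N show "k \<in> {..<Suc N}" by auto
  qed
  have A: "(\<Sum>k\<in>Poly_Mapping.keys e. Poly_Mapping.lookup e k * c k) = (\<Sum>k<Suc (Suc N). Poly_Mapping.lookup e k * c k)"
    by (rule sum.mono_neutral_left[OF finite_lessThan k1]) (auto simp: in_keys_iff)
  have B: "(\<Sum>k<Suc (Suc N). Poly_Mapping.lookup e k * c k) =
      Poly_Mapping.lookup e 1 * c 1 + (\<Sum>k<N. Poly_Mapping.lookup e (Suc (Suc k)) * c (Suc (Suc k)))"
    by (simp only: sum.lessThan_Suc_shift) (simp add: assms)
  have C: "(\<Sum>k<N. Poly_Mapping.lookup e (Suc (Suc k)) * c (Suc (Suc k))) = (\<Sum>k<Suc N. Poly_Mapping.lookup (sh e) k * c (Suc k))"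
    by (simp only: sum.lessThan_Suc_shift) (simp add: lookup_sh)
  have D: "(\<Sum>k\<in>Poly_Mapping.keys (sh e). Poly_Mapping.lookup (sh e) k * c (Suc k)) = (\<Sum>k<Suc N. Poly_Mapping.lookup (sh e) k * c (Suc k))"
    by (rule sum.mono_neutral_left[OF finite_lessThan k2]) (auto simp: in_keys_iff)
  show ?thesis using A B C D by simp
qed

lemma sum_shT:
  assumes "\<forall>t\<in>T. 1 \<le> t"
  shows "(\<Sum>t\<in>T. c t) = (\<Sum>t\<in>shT T. c (Suc t))"
proof -
  have "(\<Sum>t\<in>shT T. c (Suc t)) = (\<Sum>t\<in>T. c (Suc (t - 1)))"
    unfolding shT_def sum.reindex[OF inj_on_pred[OF assms]] o_def ..
  also have "\<dots> = (\<Sum>t\<in>T. c t)"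
  proof (rule sum.cong[OF refl])
    fix t assume "t \<in> T"
    with assms have "Suc (t - 1) = t" by auto
    then show "c (Suc (t - 1)) = c t" by simp
  qed
  finally show ?thesis by simp
qed

lemma card_shT:
  assumes "\<forall>t\<in>T. 1 \<le> t"
  shows "card (shT T) = card T"
  unfolding shT_def by (rule card_image[OF inj_on_pred[OF assms]])

lemma wt_phi:
  assumes "Poly_Mapping.lookup (fst m) 0 = 0" "\<forall>t\<in>snd m. 1 \<le> t"
  shows "wt p m = p * Poly_Mapping.lookup (fst m) 1 + p * wt p (phi m)"
proof -
  have a: "(\<Sum>k\<in>Poly_Mapping.keys (fst m). Poly_Mapping.lookup (fst m) k * p ^ k) =
     Poly_Mapping.lookup (fst m) 1 * p ^ 1 + (\<Sum>k\<in>Poly_Mapping.keys (sh (fst m)). Poly_Mapping.lookup (sh (fst m)) k * p ^ (Suc k))"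
    by (rule sum_sh[OF assms(1)])
  have b: "(\<Sum>t\<in>snd m. p ^ t) = (\<Sum>t\<in>shT (snd m). p ^ (Suc t))"
    by (rule sum_shT[OF assms(2)])
  show ?thesis
    unfolding wt_def a b by (simp add: phi_def sum_distrib_left mult_ac distrib_left)
qed

definition ES :: "(nat \<Rightarrow>\<^sub>0 nat) \<Rightarrow> nat" where
  "ES e = (\<Sum>k\<in>Poly_Mapping.keys e. Poly_Mapping.lookup e k)"

lemma ES_sh:
  assumes "Poly_Mapping.lookup e 0 = 0"
  shows "ES e = Poly_Mapping.lookup e 1 + ES (sh e)"
  using sum_sh[OF assms, of "\<lambda>k. 1"] by (simp add: ES_def)

lemma deg_wt:
  assumes "finite (snd m)" "1 \<le> p"
  shows "deg p m + 2 * ES (fst m) + card (snd m) = 2 * wt p m"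
proof -
  let ?e = "fst m" and ?T = "snd m"
  have a: "(\<Sum>k\<in>Poly_Mapping.keys ?e. Poly_Mapping.lookup ?e k * (2 * (p ^ k - 1))) + 2 * ES ?e
      = 2 * (\<Sum>k\<in>Poly_Mapping.keys ?e. Poly_Mapping.lookup ?e k * p ^ k)"
  proof -
    have "(\<Sum>k\<in>Poly_Mapping.keys ?e. Poly_Mapping.lookup ?e k * (2 * (p ^ k - 1))) + 2 * ES ?e
       = (\<Sum>k\<in>Poly_Mapping.keys ?e. Poly_Mapping.lookup ?e k * (2 * (p ^ k - 1)) + 2 * Poly_Mapping.lookup ?e k)"
      by (simp add: ES_def sum_distrib_left sum.distrib)
    also have "\<dots> = (\<Sum>k\<in>Poly_Mapping.keys ?e. 2 * (Poly_Mapping.lookup ?e k * p ^ k))"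
    proof (rule sum.cong[OF refl])
      fix k
      have "1 \<le> p ^ k" using assms(2) by simp
      then have "2 * (p ^ k - 1) + 2 = 2 * p ^ k" by arith
      then have "Poly_Mapping.lookup ?e k * (2 * (p ^ k - 1)) + 2 * Poly_Mapping.lookup ?e k
          = Poly_Mapping.lookup ?e k * (2 * p ^ k)"
        by (metis add_mult_distrib2 mult.commute)
      then show "Poly_Mapping.lookup ?e k * (2 * (p ^ k - 1)) + 2 * Poly_Mapping.lookup ?e k
          = 2 * (Poly_Mapping.lookup ?e k * p ^ k)" by simp
    qed
    also have "\<dots> = 2 * (\<Sum>k\<in>Poly_Mapping.keys ?e. Poly_Mapping.lookup ?e k * p ^ k)"
      by (simp add: sum_distrib_left)
    finally show ?thesis .
  qed
  have b: "(\<Sum>k\<in>?T. 2 * p ^ k - 1) + card ?T = 2 * (\<Sum>k\<in>?T. p ^ k)"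
  proof -
    have "(\<Sum>k\<in>?T. 2 * p ^ k - 1) + card ?T = (\<Sum>k\<in>?T. 2 * p ^ k - 1 + 1)"
      by (simp only: card_eq_sum sum.distrib)
    also have "\<dots> = (\<Sum>k\<in>?T. 2 * p ^ k)"
    proof (rule sum.cong[OF refl])
      fix k
      have "1 \<le> p ^ k" using assms(2) by simp
      then show "2 * p ^ k - 1 + 1 = 2 * p ^ k" by arith
    qed
    also have "\<dots> = 2 * (\<Sum>k\<in>?T. p ^ k)" by (simp add: sum_distrib_left)
    finally show ?thesis .
  qed
  show ?thesis
    using a b unfolding deg_def wt_def by simp
qed

section \<open>The inverse on monomials\<close>

definition unsh :: "nat \<Rightarrow> (nat \<Rightarrow>\<^sub>0 nat) \<Rightarrow> (nat \<Rightarrow>\<^sub>0 nat)" where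
  "unsh a e = Abs_poly_mapping (\<lambda>k. if k = 0 then 0 else if k = 1 then a else Poly_Mapping.lookup e (k - 1))"

lemma lookup_unsh: "Poly_Mapping.lookup (unsh a e) k = (if k = 0 then 0 else if k = 1 then a else Poly_Mapping.lookup e (k - 1))"
proof -
  have "{k. (if k = 0 then 0 else if k = 1 then a else Poly_Mapping.lookup e (k - 1)) \<noteq> 0} \<subseteq> insert 1 (Suc ` {k. Poly_Mapping.lookup e k \<noteq> 0})"
  proof
    fix k assume k: "k \<in> {k. (if k = 0 then 0 else if k = 1 then a else Poly_Mapping.lookup e (k - 1)) \<noteq> 0}"
    show "k \<in> insert 1 (Suc ` {k. Poly_Mapping.lookup e k \<noteq> 0})"
    proof (cases "k = 1")
      case False
      with k have "k \<noteq> 0" "Poly_Mapping.lookup e (k - 1) \<noteq> 0" by (auto split: if_splits)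
      then show ?thesis by (intro insertI2 image_eqI[of _ _ "k - 1"]) auto
    qed simp
  qed
  then have "finite {k. (if k = 0 then 0 else if k = 1 then a else Poly_Mapping.lookup e (k - 1)) \<noteq> 0}"
    by (rule finite_subset) simp
  then show ?thesis unfolding unsh_def by simp
qed

lemma sh_unsh: "Poly_Mapping.lookup e 0 = 0 \<Longrightarrow> sh (unsh a e) = e"
  by (rule poly_mapping_eqI) (simp add: lookup_sh lookup_unsh)

lemma unsh_sh: "Poly_Mapping.lookup e 0 = 0 \<Longrightarrow> unsh (Poly_Mapping.lookup e 1) (sh e) = e"
  by (rule poly_mapping_eqI) (auto simp: lookup_sh lookup_unsh)

definition ups :: "nat \<Rightarrow> nat \<Rightarrow> amono \<Rightarrow> amono" where
  "ups p j m = (unsh (j - wt p m) (fst m), Suc ` snd m)"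

lemma shT_Suc: "shT (Suc ` T) = T"
  by (simp add: shT_def image_image)

lemma Suc_shT: "\<forall>t\<in>T. 1 \<le> t \<Longrightarrow> Suc ` shT T = T"
proof -
  assume a: "\<forall>t\<in>T. 1 \<le> t"
  have "Suc ` shT T = (\<lambda>t. Suc (t - 1)) ` T" by (simp add: shT_def image_image)
  also have "\<dots> = (\<lambda>t. t) ` T"
    using a by (intro image_cong refl) auto
  finally show ?thesis by simp
qed

definition Mon1 :: "nat \<Rightarrow> nat \<Rightarrow> nat \<Rightarrow> amono \<Rightarrow> bool" where
  "Mon1 p i j m \<longleftrightarrow> valid_mono i m \<and> wt p m = p * j"

definition Mon2 :: "nat \<Rightarrow> nat \<Rightarrow> nat \<Rightarrow> amono \<Rightarrow> bool" where
  "Mon2 p i j m \<longleftrightarrow> valid_mono (i - 1) m \<and> wt p m \<le> p * (j div p)"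

lemma wt_dvd:
  assumes "valid_mono n m"
  shows "p dvd wt p m"
proof -
  have "wt p m = p * Poly_Mapping.lookup (fst m) 1 + p * wt p (phi m)"
    using assms by (intro wt_phi) (auto simp: valid_mono_def)
  then show ?thesis by simp
qed

lemma Mon1_phi:
  assumes "Mon1 p i j m" "1 \<le> i" "0 < p"
  shows "Mon2 p i j (phi m)" and "ups p j (phi m) = m"
    and "j = Poly_Mapping.lookup (fst m) 1 + wt p (phi m)"
proof -
  have v: "Poly_Mapping.lookup (fst m) 0 = 0" "finite (snd m)" "\<forall>t\<in>snd m. i + 1 \<le> t"
    using assms(1) by (auto simp: Mon1_def valid_mono_def)
  have g: "\<forall>t\<in>snd m. 1 \<le> t" using v(3) by auto
  have "p * j = p * Poly_Mapping.lookup (fst m) 1 + p * wt p (phi m)"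
    using wt_phi[OF v(1) g, of p] assms(1) by (simp add: Mon1_def)
  then have "p * j = p * (Poly_Mapping.lookup (fst m) 1 + wt p (phi m))" by (simp add: distrib_left)
  then show j: "j = Poly_Mapping.lookup (fst m) 1 + wt p (phi m)" using assms(3) by simp
  have vp: "valid_mono (i - 1) (phi m)"
    using v assms(2) unfolding valid_mono_def phi_def by (auto simp: lookup_sh shT_def)
  have le: "wt p (phi m) \<le> j" using j by simp
  obtain q where q: "wt p (phi m) = p * q" using wt_dvd[OF vp] by (auto elim: dvdE)
  have "q \<le> j div p" using le q assms(3)
    by (metis div_le_mono nonzero_mult_div_cancel_left not_gr_zero)
  then have "wt p (phi m) \<le> p * (j div p)" using q by simp
  with vp show "Mon2 p i j (phi m)" by (simp add: Mon2_def)
  have e: "j - wt p (phi m) = Poly_Mapping.lookup (fst m) 1" using j by simp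
  have "ups p j (phi m) = (unsh (Poly_Mapping.lookup (fst m) 1) (sh (fst m)), Suc ` shT (snd m))"
    unfolding ups_def e by (simp only: phi_def fst_conv snd_conv)
  also have "\<dots> = m"
    by (simp only: unsh_sh[OF v(1)] Suc_shT[OF g] prod.collapse)
  finally show "ups p j (phi m) = m" .
qed

lemma Mon2_ups:
  assumes "Mon2 p i j m" "1 \<le> i" "0 < p"
  shows "Mon1 p i j (ups p j m)" and "phi (ups p j m) = m"
proof -
  have v: "Poly_Mapping.lookup (fst m) 0 = 0" "finite (snd m)" "\<forall>t\<in>snd m. i \<le> t"
    using assms(1,2) by (auto simp: Mon2_def valid_mono_def)
  have le: "wt p m \<le> j"
    using assms(1) unfolding Mon2_def using times_div_less_eq_dividend[of p j] by linarith
  show pu: "phi (ups p j m) = m"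
    using v by (simp add: ups_def phi_def sh_unsh shT_Suc)
  have v2: "Poly_Mapping.lookup (fst (ups p j m)) 0 = 0" "\<forall>t\<in>snd (ups p j m). 1 \<le> t"
    by (auto simp: ups_def lookup_unsh)
  have "wt p (ups p j m) = p * (j - wt p m) + p * wt p m"
    using wt_phi[OF v2, of p] pu by (simp add: ups_def lookup_unsh)
  also have "\<dots> = p * j" using le by (simp add: diff_mult_distrib2)
  finally have w: "wt p (ups p j m) = p * j" .
  have "valid_mono i (ups p j m)"
    using v assms(2) by (auto simp: valid_mono_def ups_def lookup_unsh)
  with w show "Mon1 p i j (ups p j m)" by (simp add: Mon1_def)
qed

lemma deg_phi:
  assumes "Mon1 p i j m" "1 \<le> i" "0 < p"
  shows "deg p (phi m) + 2 * (p - 1) * j = deg p m"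
proof -
  have v: "Poly_Mapping.lookup (fst m) 0 = 0" "finite (snd m)" "\<forall>t\<in>snd m. i + 1 \<le> t"
    using assms(1) by (auto simp: Mon1_def valid_mono_def)
  have g: "\<forall>t\<in>snd m. 1 \<le> t" using v(3) by auto
  have D: "deg p m + 2 * ES (fst m) + card (snd m) = 2 * (p * j)"
    using deg_wt[OF v(2), of p] assms(1,3) by (simp add: Mon1_def)
  have fin': "finite (snd (phi m))" using v(2) by (simp add: phi_def shT_def)
  have D': "deg p (phi m) + 2 * ES (sh (fst m)) + card (snd m) = 2 * wt p (phi m)"
    using deg_wt[OF fin', of p] assms(3) card_shT[OF g] by (simp add: phi_def)
  have E: "ES (fst m) = Poly_Mapping.lookup (fst m) 1 + ES (sh (fst m))"
    by (rule ES_sh[OF v(1)])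
  have j: "j = Poly_Mapping.lookup (fst m) 1 + wt p (phi m)"
    by (rule Mon1_phi(3)[OF assms])
  have pj: "(p - 1) * j + j = p * j" using assms(3) by (cases p) auto
  have t: "2 * (p - 1) * j = 2 * ((p - 1) * j)" by simp
  show ?thesis using D D' E j pj t by linarith
qed

theorem mainTheorem14:
  fixes i j :: nat
  assumes "CARD('p::prime_card) \<noteq> 2"
    and "1 \<le> i"
  shows "\<exists>f :: 'p mod_ring avec \<Rightarrow> 'p mod_ring avec.
           comod_iso_shift CARD('p) i (2 * (CARD('p) - 1) * j)
             (M_space CARD('p) i j) (N_space CARD('p) (i - 1) (j div CARD('p))) f"
proof -
  let ?p = "CARD('p)"
  have p0: "0 < ?p" using prime_card[where 'a='p] prime_gt_0_nat by blast
  let ?V = "M_space ?p i j :: 'p mod_ring avec set"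
  let ?W = "N_space ?p (i - 1) (j div ?p) :: 'p mod_ring avec set"
  have V: "x \<in> ?V \<longleftrightarrow> (\<forall>m\<in>Poly_Mapping.keys x. Mon1 ?p i j m)" for x :: "'p mod_ring avec"
    by (simp add: M_space_def Mon1_def)
  have W: "x \<in> ?W \<longleftrightarrow> (\<forall>m\<in>Poly_Mapping.keys x. Mon2 ?p i j m)" for x :: "'p mod_ring avec"
    by (simp add: N_space_def Mon2_def)
  have bij: "bij_betw (remap phi) ?V ?W"
  proof (rule bij_betw_byWitness[where f' = "remap (ups ?p j)"])
    show "\<forall>a\<in>?V. remap (ups ?p j) (remap phi a) = a"
    proof
      fix a assume a: "a \<in> ?V"
      have aV: "\<forall>m\<in>Poly_Mapping.keys a. Mon1 ?p i j m" using a V by blast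
      show "remap (ups ?p j) (remap phi a) = a"
        unfolding remap_comp
      proof (rule remap_id_on)
        fix m assume "m \<in> Poly_Mapping.keys a"
        with aV have "Mon1 ?p i j m" by blast
        then show "(ups ?p j \<circ> phi) m = m" using Mon1_phi(2)[OF _ assms(2) p0] by simp
      qed
    qed
    show "\<forall>a\<in>?W. remap phi (remap (ups ?p j) a) = a"
    proof
      fix a assume a: "a \<in> ?W"
      have aW: "\<forall>m\<in>Poly_Mapping.keys a. Mon2 ?p i j m" using a W by blast
      show "remap phi (remap (ups ?p j) a) = a"
        unfolding remap_comp
      proof (rule remap_id_on)
        fix m assume "m \<in> Poly_Mapping.keys a"
        with aW have "Mon2 ?p i j m" by blast
        then show "(phi \<circ> ups ?p j) m = m" using Mon2_ups(2)[OF _ assms(2) p0] by simp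
      qed
    qed
    show "remap phi ` ?V \<subseteq> ?W"
    proof
      fix y assume "y \<in> remap phi ` ?V"
      then obtain a where a2: "y = remap phi a" and a1: "a \<in> ?V" by (rule imageE)
      note a = a1 a2
      show "y \<in> ?W" unfolding W
      proof
        fix m assume "m \<in> Poly_Mapping.keys y"
        then have "m \<in> phi ` Poly_Mapping.keys a" using keys_remap[of phi a] a(2) by blast
        then obtain m0 where "m = phi m0" "m0 \<in> Poly_Mapping.keys a" by (rule imageE)
        moreover have "\<forall>m\<in>Poly_Mapping.keys a. Mon1 ?p i j m" using a(1) V by blast
        ultimately show "Mon2 ?p i j m" using Mon1_phi(1)[OF _ assms(2) p0] by blast
      qed
    qed
    show "remap (ups ?p j) ` ?W \<subseteq> ?V"
    proof
      fix y assume "y \<in> remap (ups ?p j) ` ?W"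
      then obtain a where a2: "y = remap (ups ?p j) a" and a1: "a \<in> ?W" by (rule imageE)
      note a = a1 a2
      show "y \<in> ?V" unfolding V
      proof
        fix m assume "m \<in> Poly_Mapping.keys y"
        then have "m \<in> ups ?p j ` Poly_Mapping.keys a" using keys_remap[of "ups ?p j" a] a(2) by blast
        then obtain m0 where "m = ups ?p j m0" "m0 \<in> Poly_Mapping.keys a" by (rule imageE)
        moreover have "\<forall>m\<in>Poly_Mapping.keys a. Mon2 ?p i j m" using a(1) W by blast
        ultimately show "Mon1 ?p i j m" using Mon2_ups(1)[OF _ assms(2) p0] by blast
      qed
    qed
  qed
  have degc: "\<forall>x\<in>?V. \<forall>d. homog ?p d x \<longrightarrow> (\<forall>m\<in>Poly_Mapping.keys (remap phi x). deg ?p m + 2 * (?p - 1) * j = d)"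
  proof (intro ballI allI impI)
    fix x d m assume x: "x \<in> ?V" and h: "homog ?p d x" and m: "m \<in> Poly_Mapping.keys (remap phi x)"
    have "m \<in> phi ` Poly_Mapping.keys x" using keys_remap[of phi x] m by blast
    then obtain m0 where m0': "m = phi m0" "m0 \<in> Poly_Mapping.keys x" by (rule imageE)
    note m0 = m0'(2) m0'(1)
    have "Mon1 ?p i j m0" using x m0 V by blast
    then have "deg ?p (phi m0) + 2 * (?p - 1) * j = deg ?p m0" by (rule deg_phi[OF _ assms(2) p0])
    also have "\<dots> = d" using h m0 by (simp add: homog_def)
    finally show "deg ?p m + 2 * (?p - 1) * j = d" using m0 by simp
  qed
  have comm: "\<forall>x\<in>?V. \<forall>S\<subseteq>{..i}. remap phi (comp S (psi ?p i x)) = comp S (psi ?p i (remap phi x))"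
  proof (intro ballI allI impI)
    fix x :: "'p mod_ring avec" and S assume x: "x \<in> ?V"
    have "\<forall>m\<in>Poly_Mapping.keys x. finite (snd m) \<and> (\<forall>t\<in>snd m. i + 1 \<le> t)"
      using x V[of x] by (auto simp: Mon1_def valid_mono_def)
    then show "remap phi (comp S (psi ?p i x)) = comp S (psi ?p i (remap phi x))"
      by (simp add: psi_remap comp_remap)
  qed
  have "comod_iso_shift ?p i (2 * (?p - 1) * j) ?V ?W (remap phi)"
    unfolding comod_iso_shift_def
    using bij degc comm by (simp add: remap_add remap_smul)
  then show ?thesis by blast
qed

end
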